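(* Let $0<q<1$, $\alpha>-1$, let $n\ge0$ be an integer, and let $\lambda_s$ be the smallest eigenvalue of $\left((q^{\alpha+1};q)_{j+k}\,q^{-\binom{j+k+1}{2}-\alpha(j+k)}\right)_{j,k=0}^{n}$. Then \[ \lambda_s\ \ge\ \left(\sum_{m=0}^{n}\frac{q^m}{(q;q)_m\,(q^{\alpha+1};q)_m}\right)^{-1}. \] Moreover, with $\ell_m^{(\alpha)}(x;q)=(-1)^m\sqrt{\frac{(q^{\alpha+1};q)_m q^m}{(q;q)_m}}\sum_{k=0}^{m}\frac{(q^{-m};q)_k\,q^{\binom{k+1}{2}}q^{(\alpha+m)k}x^k}{(q;q)_k(q^{\alpha+1};q)_k}$, one has $\big(\ell_m^{(\alpha)}(-1;q)\big)^2=\frac{q^m}{(q;q)_m(q^{\alpha+1};q)_m}$ for every $m\ge0$.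
   Context: $(a;q)_m=\prod_{i=0}^{m-1}(1-aq^i)$ for integers $m\ge0$ (empty product $=1$). *)

theory Defs
  imports "Jordan_Normal_Form.Char_Poly"
begin

definition qpoch :: "real \<Rightarrow> real \<Rightarrow> nat \<Rightarrow> real" where
  "qpoch a q m = (\<Prod>i<m. (1 - a * q ^ i))"

definition hankel_mat :: "real \<Rightarrow> real \<Rightarrow> nat \<Rightarrow> real mat" where
  "hankel_mat q \<alpha> n = mat (n+1) (n+1)
     (\<lambda>(j,k). qpoch (q powr (\<alpha>+1)) q (j+k)
        * q powr (- real ((j+k+1) choose 2) - \<alpha> * real (j+k)))"

definition ell :: "real \<Rightarrow> real \<Rightarrow> nat \<Rightarrow> real \<Rightarrow> real" where
  "ell q \<alpha> m x = (-1) ^ m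
     * sqrt (qpoch (q powr (\<alpha>+1)) q m * q ^ m / qpoch q q m)
     * (\<Sum>k\<le>m. qpoch (q powr (- real m)) q k * q ^ ((k+1) choose 2)
          * q powr ((\<alpha> + real m) * real k) * x ^ k
          / (qpoch q q k * qpoch (q powr (\<alpha>+1)) q k))"

end

theory Submission
  imports Defs
begin

definition PP :: "real \<Rightarrow> nat \<Rightarrow> nat \<Rightarrow> real" where
  "PP q m k = (\<Prod>t<k. 1 - q^m * inverse q ^ t)"

definition gb :: "real \<Rightarrow> nat \<Rightarrow> nat \<Rightarrow> real" where
  "gb q m k = PP q m k / qpoch q q k"

lemma choose2_Suc: "Suc k choose 2 = (k choose 2) + k"
proof -
  have "Suc k choose 2 = Suc k choose (Suc 1)" by (simp only: Suc_1)
  also have "\<dots> = (k choose 1) + (k choose (Suc 1))" by (rule binomial_Suc_Suc)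
  also have "\<dots> = k + (k choose 2)" by (simp only: choose_one Suc_1)
  finally show ?thesis by (simp only: add.commute)
qed

lemma choose2_0[simp]: "(0::nat) choose 2 = 0"
  by (simp add: numeral_2_eq_2)

lemma qpoch_0[simp]: "qpoch x q 0 = 1"
  by (simp add: qpoch_def)

lemma qpoch_Suc: "qpoch x q (Suc k) = qpoch x q k * (1 - x*q^k)"
  by (simp add: qpoch_def)

lemma qpoch_Suc_shift: "qpoch x q (Suc k) = (1 - x) * qpoch (x*q) q k"
  unfolding qpoch_def by (subst prod.lessThan_Suc_shift) (simp add: mult.assoc)

lemma qpoch_add: "qpoch x q (k+j) = qpoch x q k * qpoch (x*q^k) q j"
  by (induction j) (simp_all add: qpoch_Suc power_add mult.assoc)

lemma qpoch_pos: assumes "0 \<le> x" "x < 1" "0 < q" "q \<le> 1" shows "qpoch x q k > 0"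
  unfolding qpoch_def
proof (rule prod_pos)
  fix i assume "i \<in> {..<k}"
  have "q^i \<le> 1" using assms by (simp add: power_le_one)
  hence "x * q^i \<le> x" using assms by (simp add: mult_left_le)
  thus "0 < 1 - x * q^i" using assms by simp
qed

lemma PP_0[simp]: "PP q m 0 = 1" by (simp add: PP_def)

lemma PP_Suc: "PP q m (Suc k) = PP q m k * (1 - q^m * inverse q ^ k)"
  by (simp add: PP_def)

lemma PP_Suc_shift: assumes "q \<noteq> 0" shows "PP q (Suc m) (Suc k) = (1 - q^Suc m) * PP q m k"
  unfolding PP_def using assms by (subst prod.lessThan_Suc_shift) (simp add: field_simps)

lemma PP_gt: assumes "q \<noteq> 0" "m < k" shows "PP q m k = 0"
  unfolding PP_def using assms by (intro prod_zero) (auto intro!: bexI[where x=m] simp: field_simps)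

lemma PP_nonneg: assumes "0 < q" "q \<le> 1" shows "PP q m k \<ge> 0"
proof (cases "m < k")
  case True thus ?thesis using PP_gt assms by simp
next
  case False
  show ?thesis unfolding PP_def
  proof (rule prod_nonneg)
    fix t assume "t \<in> {..<k}"
    hence "t \<le> m" using False by simp
    hence "q^m \<le> q^t" using assms by (simp add: power_decreasing)
    thus "0 \<le> 1 - q^m * inverse q ^ t" using assms by (simp add: field_simps)
  qed
qed

lemma gb_0[simp]: "gb q m 0 = 1" by (simp add: gb_def)

lemma gb_gt: assumes "q \<noteq> 0" "m < k" shows "gb q m k = 0"
  using PP_gt[OF assms] by (simp add: gb_def)

lemma gb_nonneg: assumes "0 < q" "q < 1" shows "gb q m k \<ge> 0"
  using PP_nonneg[of q m k] qpoch_pos[of q q k] assms by (simp add: gb_def)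

lemma gb_pascal: assumes "0 < q" "q < 1"
  shows "gb q (Suc m) (Suc k) = gb q m k + q^Suc k * gb q m (Suc k)"
proof -
  define P where "P = PP q m k"
  define Q where "Q = qpoch q q k"
  have pos: "Q > 0" using qpoch_pos[of q q k] assms by (simp add: Q_def)
  have "q^k \<le> 1" using assms by (simp add: power_le_one)
  hence "q * q^k \<le> q" using assms by (simp add: mult_left_le)
  hence pos2: "1 - q * q^k > 0" using assms by linarith
  have key: "q^Suc k * (1 - q^m * inverse q ^ k) = q^Suc k - q^Suc m"
    using assms by (simp add: field_simps)
  have e1: "gb q (Suc m) (Suc k) = (1 - q^Suc m) * P / (Q * (1 - q*q^k))"
    unfolding gb_def P_def Q_def
    using PP_Suc_shift[of q m k] assms by (simp add: qpoch_Suc)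
  have e2: "gb q m (Suc k) = P * (1 - q^m * inverse q ^ k) / (Q * (1 - q*q^k))"
    unfolding gb_def P_def Q_def by (simp add: qpoch_Suc PP_Suc)
  have e3: "gb q m k = P / Q" by (simp add: gb_def P_def Q_def)
  have "gb q m k + q^Suc k * gb q m (Suc k)
     = (P * (1 - q*q^k) + P * (q^Suc k * (1 - q^m * inverse q ^ k))) / (Q * (1 - q*q^k))"
    unfolding e2 e3 using pos pos2 by (simp add: field_simps)
  also have "\<dots> = (1 - q^Suc m) * P / (Q * (1 - q*q^k))"
    unfolding key by (simp add: algebra_simps)
  finally show ?thesis using e1 by simp
qed

lemma gb_diag: assumes "0 < q" "q < 1" shows "gb q m m = 1"
proof (induction m)
  case 0 thus ?case by simp
next
  case (Suc m) thus ?case using gb_pascal[OF assms, of m m] gb_gt[of q m "Suc m"] assms by simp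
qed

lemma rothe: assumes "0 < q" "q < 1"
  shows "(\<Sum>k\<le>m. (-1)^k * gb q m k * q^(k choose 2) * x^k) = qpoch x q m"
proof (induction m arbitrary: x)
  case 0 thus ?case by simp
next
  case (Suc m)
  define s where "s k = (-1)^k * gb q m k * q^(k choose 2) * (q*x)^k" for k
  have R: "(\<Sum>k\<le>m. s k) = qpoch (q*x) q m" unfolding s_def by (rule Suc.IH)
  have t: "(-1)^(Suc l) * gb q (Suc m) (Suc l) * q^(Suc l choose 2) * x^(Suc l)
        = - x * s l + s (Suc l)" for l
    unfolding s_def gb_pascal[OF assms] choose2_Suc
    by (simp add: algebra_simps power_add power_mult_distrib)
  have "(\<Sum>k\<le>Suc m. (-1)^k * gb q (Suc m) k * q^(k choose 2) * x^k)
      = 1 + (\<Sum>l\<le>m. - x * s l + s (Suc l))"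
    by (subst sum.atMost_Suc_shift) (simp only: t, simp)
  also have "\<dots> = 1 - x * (\<Sum>l\<le>m. s l) + (\<Sum>l\<le>m. s (Suc l))"
    by (simp add: sum.distrib sum_distrib_left sum_negf sum_subtractf)
  also have "(\<Sum>l\<le>m. s (Suc l)) = (\<Sum>k\<le>Suc m. s k) - s 0"
    by (subst sum.atMost_Suc_shift) simp
  also have "\<dots> = (\<Sum>k\<le>m. s k) - 1"
    using gb_gt[of q m "Suc m"] assms by (simp add: s_def)
  finally show ?case unfolding R qpoch_Suc_shift[of x q m] by (simp add: algebra_simps mult.commute[of x q])
qed

definition wt :: "real \<Rightarrow> nat \<Rightarrow> nat \<Rightarrow> real" where
  "wt q m k = (-1)^k * gb q m k * q^(k choose 2)"

definition ff :: "real \<Rightarrow> nat \<Rightarrow> real \<Rightarrow> nat \<Rightarrow> real" where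
  "ff q j a k = (inverse q ^ k)^j * qpoch (a*q^k) q j"

lemma ff_0[simp]: "ff q 0 a k = 1" by (simp add: ff_def)

lemma ff_Suc: assumes "q \<noteq> 0"
  shows "ff q (Suc j) a k = ff q j a k * (inverse q ^ k - a * q^j)"
  unfolding ff_def qpoch_Suc using assms by (simp add: field_simps power_add)

lemma qpoch_inv_zero: assumes "q \<noteq> 0" "i < m" shows "qpoch (inverse q ^ i) q m = 0"
  unfolding qpoch_def using assms
  by (intro prod_zero) (auto intro!: bexI[where x=i] simp: field_simps)

lemma orth_base: assumes "0 < q" "q < 1"
  shows "(\<Sum>k\<le>m. wt q m k * (inverse q ^ k)^i) = qpoch (inverse q ^ i) q m"
proof -
  have "(inverse q ^ k)^i = (inverse q ^ i)^k" for k
    by (metis power_mult mult.commute)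
  hence "(\<Sum>k\<le>m. wt q m k * (inverse q ^ k)^i) = (\<Sum>k\<le>m. (-1)^k * gb q m k * q^(k choose 2) * (inverse q ^ i)^k)"
    by (simp add: wt_def)
  also have "\<dots> = qpoch (inverse q ^ i) q m" by (rule rothe[OF assms])
  finally show ?thesis .
qed

lemma orth_gen: assumes "0 < q" "q < 1"
  shows "(i + j < m \<longrightarrow> (\<Sum>k\<le>m. wt q m k * (inverse q ^ k)^i * ff q j a k) = 0) \<and>
         (i + j = m \<longrightarrow> (\<Sum>k\<le>m. wt q m k * (inverse q ^ k)^i * ff q j a k) = qpoch (inverse q ^ m) q m)"
proof (induction j arbitrary: i)
  case 0
  show ?case using orth_base[OF assms, of m i] qpoch_inv_zero[of q i m] assms by auto
next
  case (Suc j)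
  have q0: "q \<noteq> 0" using assms by simp
  have "(\<Sum>k\<le>m. wt q m k * (inverse q ^ k)^i * ff q (Suc j) a k)
     = (\<Sum>k\<le>m. wt q m k * (inverse q ^ k)^(Suc i) * ff q j a k)
       - a * q^j * (\<Sum>k\<le>m. wt q m k * (inverse q ^ k)^i * ff q j a k)"
    unfolding ff_Suc[OF q0] by (simp add: sum_distrib_left sum_subtractf[symmetric] algebra_simps)
  thus ?case using Suc.IH[of i] Suc.IH[of "Suc i"] by auto
qed

lemma t_alg: assumes "1 - a \<noteq> 0" "Q \<noteq> 0" "D \<noteq> (0::real)"
  shows "(1 - a) * ((G0 + q*p*G1) * (E*p*p) * (a*A) / ((1-a)*Q))
     = G0*E*A*p/Q*(a*p) + G1*(E*p*p)*(a*A)*(q*p)/(Q*D) * D"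
  using assms by (simp add: field_simps)

definition Ev :: "real \<Rightarrow> nat \<Rightarrow> real \<Rightarrow> real" where
  "Ev q m a = (\<Sum>k\<le>m. gb q m k * q^(2*(k choose 2)) * a^k / qpoch a q k)"

lemma Ev_step: assumes "0 < q" "q < 1" "0 \<le> a" "a < 1"
  shows "(1 - a) * Ev q (Suc m) a = Ev q m (a*q)"
proof -
  have aq0: "0 \<le> a*q" using assms by simp
  have aq1: "a*q < 1" using assms mult_left_le[of q a] by linarith
  define s where "s k = gb q m k * q^(2*(k choose 2)) * a^k * q^k / qpoch (a*q) q k" for k
  define g where "g k = s k * (1 - a * q^k)" for k
  have Ev2: "Ev q m (a*q) = (\<Sum>k\<le>m. s k)"
    unfolding Ev_def s_def by (simp add: power_mult_distrib mult.assoc)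
  have t: "(1 - a) * (gb q (Suc m) (Suc l) * q^(2*(Suc l choose 2)) * a^(Suc l) / qpoch a q (Suc l))
        = s l * (a * q^l) + g (Suc l)" for l
  proof -
    have Qp: "qpoch (a*q) q l > 0" using qpoch_pos[OF aq0 aq1, of q l] assms by simp
    have "q^l \<le> 1" using assms by (simp add: power_le_one)
    hence "a*q*q^l \<le> a*q" using aq0 by (simp add: mult_left_le)
    hence Dp: "1 - a*q*q^l > 0" using aq1 by linarith
    have a1: "1 - a \<noteq> 0" using assms by simp
    have h1: "q^(2*((l choose 2)+l)) = q^(2*(l choose 2)) * q^l * q^l"
      by (simp only: distrib_left mult_2[of l] power_add mult.assoc)
    have hD: "1 - a*(q*q^l) = 1 - a*q*q^l" by (simp add: mult.assoc)
    show ?thesis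
      unfolding g_def s_def gb_pascal[OF assms(1,2)] choose2_Suc qpoch_Suc_shift[of a q]
        qpoch_Suc[of "a*q" q l] h1 power_Suc hD
      using Qp Dp by (intro t_alg[OF a1]) auto
  qed
  have E1: "Ev q (Suc m) a = 1 + (\<Sum>l\<le>m. gb q (Suc m) (Suc l) * q^(2*(Suc l choose 2)) * a^(Suc l) / qpoch a q (Suc l))"
    unfolding Ev_def by (subst sum.atMost_Suc_shift) simp
  have "(1 - a) * Ev q (Suc m) a = (1 - a) + (\<Sum>l\<le>m. (1 - a) * (gb q (Suc m) (Suc l) * q^(2*(Suc l choose 2)) * a^(Suc l) / qpoch a q (Suc l)))"
    unfolding E1 by (simp only: distrib_left sum_distrib_left mult_1_right)
  also have "\<dots> = (1 - a) + (\<Sum>l\<le>m. s l * (a * q^l) + g (Suc l))"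
    by (simp only: t)
  also have "\<dots> = (1 - a) + (\<Sum>l\<le>m. s l * (a * q^l)) + (\<Sum>l\<le>m. g (Suc l))"
    by (simp only: sum.distrib add.assoc)
  also have "(\<Sum>l\<le>m. g (Suc l)) = (\<Sum>k\<le>Suc m. g k) - g 0"
    by (subst sum.atMost_Suc_shift) simp
  also have "\<dots> = (\<Sum>k\<le>m. g k) - (1 - a)"
    using gb_gt[of q m "Suc m"] assms by (simp add: g_def s_def)
  finally have "(1 - a) * Ev q (Suc m) a = (\<Sum>l\<le>m. s l * (a * q^l)) + (\<Sum>k\<le>m. g k)"
    by simp
  also have "\<dots> = (\<Sum>k\<le>m. s k * (a * q^k) + g k)"
    by (simp only: sum.distrib)
  also have "\<dots> = (\<Sum>k\<le>m. s k)"
    unfolding g_def by (rule sum.cong) (simp_all add: algebra_simps)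
  finally show ?thesis using Ev2 by simp
qed

lemma Ev_closed: assumes "0 < q" "q < 1" "0 \<le> a" "a < 1"
  shows "Ev q m a = 1 / qpoch a q m"
  using assms(3,4)
proof (induction m arbitrary: a)
  case 0 thus ?case by (simp add: Ev_def)
next
  case (Suc m)
  have aq0: "0 \<le> a*q" using assms Suc.prems by simp
  have aq1: "a*q < 1" using assms Suc.prems mult_left_le[of q a] by linarith
  have "(1 - a) * Ev q (Suc m) a = 1 / qpoch (a*q) q m"
    using Ev_step[OF assms(1,2) Suc.prems] Suc.IH[OF aq0 aq1] by simp
  moreover have "1 - a \<noteq> 0" using Suc.prems by simp
  moreover have "qpoch (a*q) q m > 0" using qpoch_pos[OF aq0 aq1, of q m] assms by simp
  ultimately show ?case unfolding qpoch_Suc_shift[of a q m] by (simp add: field_simps)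
qed


lemma L1: assumes "q \<noteq> 0"
  shows "qpoch (inverse q ^ m) q k = (-1)^k * (inverse q)^(m*k) * q^(k choose 2) * PP q m k"
proof (induction k)
  case 0 thus ?case by simp
next
  case (Suc k)
  have f: "1 - inverse q ^ m * q ^ k = - (inverse q ^ m * q^k) * (1 - q^m * inverse q ^ k)"
    using assms by (simp add: field_simps)
  show ?case unfolding qpoch_Suc PP_Suc Suc.IH choose2_Suc f
    by (simp add: power_add mult_ac)
qed

lemma ell_term: assumes "0 < q" "q < 1"
  shows "qpoch (q powr (- real m)) q k * q ^ ((k+1) choose 2) * q powr ((\<alpha> + real m) * real k) * (-1) ^ k
      / (qpoch q q k * qpoch (q powr (\<alpha>+1)) q k)
    = gb q m k * q^(2*(k choose 2)) * (q powr (\<alpha>+1))^k / qpoch (q powr (\<alpha>+1)) q k"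
proof -
  define a where "a = q powr (\<alpha>+1)"
  have e1: "q powr (- real m) = inverse q ^ m"
    using assms by (simp add: powr_minus powr_realpow power_inverse)
  have "q powr ((\<alpha> + real m) * real k) = q powr ((\<alpha>+1) * real k + real (m*k) - real k)"
    by (simp add: algebra_simps)
  also have "\<dots> = a^k * q^(m*k) * inverse q ^ k"
    using assms unfolding a_def
    by (simp add: powr_add powr_diff powr_realpow powr_powr[symmetric] power_inverse divide_inverse power_mult)
  finally have e2: "q powr ((\<alpha> + real m) * real k) = a^k * q^(m*k) * inverse q ^ k" .
  have qq: "qpoch q q k > 0" using qpoch_pos[of q q k] assms by simp
  have PPe: "PP q m k = gb q m k * qpoch q q k" using qq by (simp add: gb_def)
  have s1: "(-1::real)^k * (-1)^k = 1" by (simp flip: power_add)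
  have s2: "inverse q ^ (m*k) * q^(m*k) = 1" using assms by (simp flip: power_mult_distrib)
  have s3: "q^k * inverse q ^ k = 1" using assms by (simp add: power_inverse field_simps)
  have s4: "q^(2*(k choose 2)) = q^(k choose 2) * q^(k choose 2)" by (simp add: mult_2 power_add)
  show ?thesis
    unfolding e1 e2 L1[of q, OF order.strict_implies_not_eq[OF assms(1), symmetric]] Suc_eq_plus1[symmetric] choose2_Suc PPe
      a_def[symmetric] s4
  proof -
    let ?G = "gb q m k" and ?C = "q^(k choose 2)" and ?A = "qpoch a q k" and ?Q = "qpoch q q k"
    have "(-1) ^ k * inverse q ^ (m * k) * ?C * (?G * ?Q) * q ^ ((k choose 2) + k) * (a ^ k * q ^ (m * k) * inverse q ^ k) * (-1) ^ k / (?Q * ?A)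
      = ((-1)^k * (-1)^k) * (inverse q ^ (m*k) * q^(m*k)) * (q^k * inverse q ^ k) * (?G * ?C * ?C * a^k) * ?Q / (?Q * ?A)"
      by (simp add: power_add mult_ac)
    also have "\<dots> = ?G * (?C * ?C) * a^k / ?A" unfolding s1 s2 s3 using qq by simp
    finally show "(-1) ^ k * inverse q ^ (m * k) * ?C * (?G * ?Q) * q ^ ((k choose 2) + k) * (a ^ k * q ^ (m * k) * inverse q ^ k) * (-1) ^ k / (?Q * ?A)
      = ?G * (?C * ?C) * a^k / ?A" .
  qed
qed

lemma part2: assumes "0 < q" "q < 1" "\<alpha> > -1"
  shows "(ell q \<alpha> m (-1)) ^ 2 = q ^ m / (qpoch q q m * qpoch (q powr (\<alpha>+1)) q m)"
proof -
  define a where "a = q powr (\<alpha>+1)"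
  have a0: "0 < a" using assms by (simp add: a_def)
  have a1: "a < 1" unfolding a_def using assms powr_less_mono2[of "\<alpha>+1" q 1] by simp
  have S: "(\<Sum>k\<le>m. qpoch (q powr (- real m)) q k * q ^ ((k+1) choose 2)
          * q powr ((\<alpha> + real m) * real k) * (-1) ^ k
          / (qpoch q q k * qpoch (q powr (\<alpha>+1)) q k)) = 1 / qpoch a q m"
    using Ev_closed[OF assms(1,2) less_imp_le[OF a0] a1, of m]
    unfolding ell_term[OF assms(1,2)] Ev_def a_def by simp
  have Ap: "qpoch a q m > 0" using qpoch_pos[of a q m] a0 a1 assms by simp
  have Qp: "qpoch q q m > 0" using qpoch_pos[of q q m] assms by simp
  have sg: "((-1::real)^m)^2 = 1" by (simp add: power2_eq_square flip: power_add)
  have nn: "0 \<le> qpoch a q m * q ^ m / qpoch q q m" using Ap Qp assms by simp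
  have "(ell q \<alpha> m (-1)) ^ 2 = (sqrt (qpoch a q m * q ^ m / qpoch q q m))^2 * (1 / qpoch a q m)^2"
    unfolding ell_def S[unfolded a_def] a_def using sg by (simp add: power_mult_distrib power_divide)
  also have "\<dots> = q ^ m / (qpoch q q m * qpoch a q m)"
    using nn Ap Qp by (simp add: power2_eq_square field_simps)
  finally show ?thesis unfolding a_def .
qed


lemma choose_add2: "(j+k) choose 2 = (j choose 2) + (k choose 2) + j*k"
  by (induction k) (simp_all add: choose2_Suc)

lemma choose_sq: "2*(m choose 2) + m = m*m"
  by (induction m) (simp_all add: choose2_Suc)

definition hh :: "real \<Rightarrow> real \<Rightarrow> nat \<Rightarrow> real" where
  "hh q a i = qpoch a q i / (a^i * q^(i choose 2))"

definition cc :: "real \<Rightarrow> real \<Rightarrow> nat \<Rightarrow> nat \<Rightarrow> real" where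
  "cc q a m k = wt q m k * q^(k choose 2) * a^k / qpoch a q k"

lemma cc_gt: assumes "0 < q" "m < k" shows "cc q a m k = 0"
  using gb_gt[of q m k] assms by (simp add: cc_def wt_def)

lemma cc_abs: assumes "0 < q" "q < 1" "0 < a" "a < 1"
  shows "\<bar>cc q a m k\<bar> = gb q m k * q^(2*(k choose 2)) * a^k / qpoch a q k"
proof -
  have "gb q m k \<ge> 0" using gb_nonneg assms by simp
  moreover have "qpoch a q k > 0" using qpoch_pos[of a q k] assms by simp
  ultimately show ?thesis using assms
    by (simp add: cc_def wt_def abs_mult power_abs mult_2 power_add)
qed

lemma cc_hh: assumes "0 < q" "q < 1" "0 < a" "a < 1"
  shows "cc q a m j * hh q a (j+k) = wt q m j * (inverse q ^ j)^0 * ff q k a j / (a^k * q^(k choose 2))"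
proof -
  have A: "qpoch a q j > 0" using qpoch_pos[of a q j] assms by simp
  have e: "(inverse q ^ j)^k = inverse (q^(j*k))" by (simp add: power_inverse power_mult)
  show ?thesis
    unfolding cc_def hh_def qpoch_add choose_add2 ff_def e
    using A assms by (simp add: field_simps power_add)
qed

lemma inner: assumes "0 < q" "q < 1" "0 < a" "a < 1" "k \<le> m"
  shows "(\<Sum>j\<le>m. cc q a m j * hh q a (j+k))
     = (if k < m then 0 else qpoch (inverse q ^ m) q m / (a^m * q^(m choose 2)))"
proof -
  have "(\<Sum>j\<le>m. cc q a m j * hh q a (j+k))
      = (\<Sum>j\<le>m. wt q m j * (inverse q ^ j)^0 * ff q k a j) / (a^k * q^(k choose 2))"
    unfolding cc_hh[OF assms(1-4)] by (simp add: sum_divide_distrib)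
  thus ?thesis using orth_gen[OF assms(1,2), of 0 k m a] assms(5) by auto
qed

definition dd :: "real \<Rightarrow> real \<Rightarrow> nat \<Rightarrow> real" where
  "dd q a m = qpoch q q m / (q^m * qpoch a q m)"

lemma dd_eq: assumes "0 < q" "q < 1" "0 < a" "a < 1"
  shows "cc q a m m * (qpoch (inverse q ^ m) q m / (a^m * q^(m choose 2))) = dd q a m"
proof -
  have q0: "q \<noteq> 0" using assms by simp
  have A: "qpoch a q m > 0" using qpoch_pos[of a q m] assms by simp
  have Q: "qpoch q q m > 0" using qpoch_pos[of q q m] assms by simp
  have PPm: "PP q m m = qpoch q q m" using gb_diag[OF assms(1,2), of m] Q by (simp add: gb_def)
  have s1: "(-1::real)^m * (-1)^m = 1" by (simp flip: power_add)
  have sq: "q^(m choose 2) * q^(m choose 2) * q^m = q^(m*m)"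
    by (simp flip: power_add choose_sq add: mult_2)
  have s2: "inverse q ^ (m*m) * q^(m*m) = 1" using assms by (simp flip: power_mult_distrib)
  have "cc q a m m * (qpoch (inverse q ^ m) q m / (a^m * q^(m choose 2)))
     = ((-1)^m * (-1)^m) * (inverse q ^ (m*m) * (q^(m choose 2) * q^(m choose 2) * q^m))
        * qpoch q q m / (q^m * qpoch a q m)"
    unfolding cc_def wt_def gb_diag[OF assms(1,2)] L1[OF q0] PPm
    using A assms by (simp add: field_simps)
  also have "\<dots> = dd q a m" unfolding s1 sq using s2 by (simp add: dd_def mult.commute)
  finally show ?thesis .
qed


lemma hank_pow: assumes "0 < q"
  shows "q powr (- real ((i+1) choose 2) - \<alpha> * real i) = 1 / ((q powr (\<alpha>+1))^i * q^(i choose 2))"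
proof -
  have "(q powr (\<alpha>+1))^i = q powr ((\<alpha>+1) * real i)"
    using assms by (simp add: powr_realpow[symmetric] powr_powr)
  moreover have "q^(i choose 2) = q powr real (i choose 2)" using assms by (simp add: powr_realpow)
  ultimately have "(q powr (\<alpha>+1))^i * q^(i choose 2) = q powr ((\<alpha>+1) * real i + real (i choose 2))"
    by (simp add: powr_add)
  moreover have "- real ((i+1) choose 2) - \<alpha> * real i = - ((\<alpha>+1) * real i + real (i choose 2))"
    unfolding Suc_eq_plus1[symmetric] choose2_Suc by (simp add: algebra_simps)
  ultimately show ?thesis by (simp only: powr_minus inverse_eq_divide)
qed

lemma tri_solve:
  fixes g :: "nat \<Rightarrow> nat \<Rightarrow> real"
  assumes "\<And>m j. m < j \<Longrightarrow> g m j = 0" "\<And>m. g m m \<noteq> 0"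
  shows "\<exists>b. \<forall>j\<le>n. V j = (\<Sum>m\<le>n. b m * g m j)"
  using assms
proof (induction n arbitrary: V g)
  case 0
  show ?case by (rule exI[where x="\<lambda>_. V 0 / g 0 0"]) (use 0 in auto)
next
  case (Suc n)
  obtain b' where b': "\<forall>j\<le>n. V (Suc j) = (\<Sum>m\<le>n. b' m * g (Suc m) (Suc j))"
    using Suc.IH[of "\<lambda>m j. g (Suc m) (Suc j)" "\<lambda>j. V (Suc j)"] Suc.prems by auto
  define b where "b m = (case m of 0 \<Rightarrow> (V 0 - (\<Sum>m\<le>n. b' m * g (Suc m) 0)) / g 0 0 | Suc m' \<Rightarrow> b' m')" for m
  have "\<forall>j\<le>Suc n. V j = (\<Sum>m\<le>Suc n. b m * g m j)"
  proof (intro allI impI)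
    fix j assume j: "j \<le> Suc n"
    have sh: "(\<Sum>m\<le>Suc n. b m * g m j) = b 0 * g 0 j + (\<Sum>m\<le>n. b' m * g (Suc m) j)"
      by (subst sum.atMost_Suc_shift) (simp add: b_def)
    show "V j = (\<Sum>m\<le>Suc n. b m * g m j)"
    proof (cases j)
      case 0 thus ?thesis unfolding sh using Suc.prems(2)[of 0] by (simp add: b_def)
    next
      case (Suc j') thus ?thesis unfolding sh using b' j Suc.prems(1)[of 0 j] by simp
    qed
  qed
  thus ?case by blast
qed

lemma CS_sum:
  fixes a :: "'a \<Rightarrow> real"
  shows "(\<Sum>i\<in>I. a i * b i)\<^sup>2 \<le> (\<Sum>i\<in>I. (a i)\<^sup>2) * (\<Sum>i\<in>I. (b i)\<^sup>2)"
proof (cases "(\<Sum>i\<in>I. (b i)\<^sup>2) > 0")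
  case False
  then consider "\<And>i. i\<in>I \<Longrightarrow> b i = 0" | "infinite I"
    by (metis (mono_tags, lifting) sum_pos2 zero_le_power2 zero_less_power2)
  thus ?thesis
    by fastforce
next
  case True
  define r where "r \<equiv> (\<Sum>i\<in>I. a i * b i) / (\<Sum>i\<in>I. (b i)\<^sup>2)"
  have "0 \<le> (\<Sum>i\<in>I. (a i - r * b i)\<^sup>2)"
    by (simp add: sum_nonneg)
  also have "... = (\<Sum>i\<in>I. (a i)\<^sup>2) - 2 * r * (\<Sum>i\<in>I. a i * b i) + r\<^sup>2 * (\<Sum>i\<in>I. (b i)\<^sup>2)"
    by (simp add: algebra_simps power2_eq_square sum_distrib_left flip: sum.distrib)
  also have "\<dots> = (\<Sum>i\<in>I. (a i)\<^sup>2) - ((\<Sum>i\<in>I. a i * b i))\<^sup>2 / (\<Sum>i\<in>I. (b i)\<^sup>2)"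
    by (simp add: r_def power2_eq_square)
  finally have "0 \<le> (\<Sum>i\<in>I. (a i)\<^sup>2) - ((\<Sum>i\<in>I. a i * b i))\<^sup>2 / (\<Sum>i\<in>I. (b i)\<^sup>2)" .
  hence "((\<Sum>i\<in>I. a i * b i))\<^sup>2 / (\<Sum>i\<in>I. (b i)\<^sup>2) \<le> (\<Sum>i\<in>I. (a i)\<^sup>2)"
    by (simp add: le_diff_eq)
  thus "((\<Sum>i\<in>I. a i * b i))\<^sup>2 \<le> (\<Sum>i\<in>I. (a i)\<^sup>2) * (\<Sum>i\<in>I. (b i)\<^sup>2)"
    by (simp add: pos_divide_le_eq True)
qed

lemma sumsq_le: fixes f :: "'a \<Rightarrow> real" assumes "finite A"
  shows "(\<Sum>j\<in>A. (f j)\<^sup>2) \<le> (\<Sum>j\<in>A. \<bar>f j\<bar>)\<^sup>2"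
  using assms
proof (induction A rule: finite_induct)
  case empty thus ?case by simp
next
  case (insert x F)
  define S where "S = (\<Sum>j\<in>F. \<bar>f j\<bar>)"
  have "0 \<le> S" unfolding S_def by (simp add: sum_nonneg)
  hence nn: "0 \<le> 2 * S * \<bar>f x\<bar>" by simp
  have "(\<Sum>j\<in>insert x F. (f j)\<^sup>2) = (f x)\<^sup>2 + (\<Sum>j\<in>F. (f j)\<^sup>2)" using insert by simp
  also have "\<dots> \<le> (f x)\<^sup>2 + S\<^sup>2" using insert.IH unfolding S_def by simp
  also have "\<dots> \<le> (\<bar>f x\<bar> + S)\<^sup>2" using nn by (simp add: power2_eq_square algebra_simps)
  also have "\<dots> = (\<Sum>j\<in>insert x F. \<bar>f j\<bar>)\<^sup>2" using insert by (simp add: S_def)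
  finally show ?case .
qed

lemma prod3: "(\<Sum>m\<in>M. X m) * (\<Sum>m'\<in>M. Y m') * (z::real) = (\<Sum>m\<in>M. \<Sum>m'\<in>M. X m * Y m' * z)"
proof -
  have "(\<Sum>m\<in>M. X m) * (\<Sum>m'\<in>M. Y m') * z = (\<Sum>m\<in>M. X m * ((\<Sum>m'\<in>M. Y m') * z))"
    by (simp only: sum_distrib_right mult.assoc)
  also have "\<dots> = (\<Sum>m\<in>M. \<Sum>m'\<in>M. X m * Y m' * z)"
    by (simp only: sum_distrib_right sum_distrib_left mult.assoc)
  finally show ?thesis .
qed

lemma quad_expand:
  fixes b :: "nat \<Rightarrow> real"
  shows "(\<Sum>i\<in>I. \<Sum>k\<in>K. (\<Sum>m\<in>M. b m * c m i) * (\<Sum>m'\<in>M. b m' * c m' k) * h i k)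
    = (\<Sum>m\<in>M. \<Sum>m'\<in>M. b m * b m' * (\<Sum>i\<in>I. \<Sum>k\<in>K. c m i * c m' k * h i k))"
proof -
  have "(\<Sum>i\<in>I. \<Sum>k\<in>K. (\<Sum>m\<in>M. b m * c m i) * (\<Sum>m'\<in>M. b m' * c m' k) * h i k)
     = (\<Sum>i\<in>I. \<Sum>k\<in>K. \<Sum>m\<in>M. \<Sum>m'\<in>M. b m * b m' * (c m i * c m' k * h i k))"
    by (intro sum.cong refl) (simp only: prod3, simp add: mult_ac)
  also have "\<dots> = (\<Sum>i\<in>I. \<Sum>m\<in>M. \<Sum>k\<in>K. \<Sum>m'\<in>M. b m * b m' * (c m i * c m' k * h i k))"
    by (rule sum.cong[OF refl], rule sum.swap)
  also have "\<dots> = (\<Sum>m\<in>M. \<Sum>i\<in>I. \<Sum>k\<in>K. \<Sum>m'\<in>M. b m * b m' * (c m i * c m' k * h i k))"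
    by (rule sum.swap)
  also have "\<dots> = (\<Sum>m\<in>M. \<Sum>i\<in>I. \<Sum>m'\<in>M. \<Sum>k\<in>K. b m * b m' * (c m i * c m' k * h i k))"
    by (rule sum.cong[OF refl], rule sum.cong[OF refl], rule sum.swap)
  also have "\<dots> = (\<Sum>m\<in>M. \<Sum>m'\<in>M. \<Sum>i\<in>I. \<Sum>k\<in>K. b m * b m' * (c m i * c m' k * h i k))"
    by (rule sum.cong[OF refl], rule sum.swap)
  also have "\<dots> = (\<Sum>m\<in>M. \<Sum>m'\<in>M. b m * b m' * (\<Sum>i\<in>I. \<Sum>k\<in>K. c m i * c m' k * h i k))"
    by (simp add: sum_distrib_left)
  finally show ?thesis .
qed


lemma restrict_sum: fixes m n :: nat assumes "m \<le> n" "\<And>j. m < j \<Longrightarrow> f j = 0"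
  shows "(\<Sum>j\<le>n. f j) = (\<Sum>j\<le>m. (f j :: real))"
proof (rule sum.mono_neutral_right)
  show "finite {..n}" by simp
  show "{..m} \<subseteq> {..n}" using assms(1) by auto
  show "\<forall>i\<in>{..n} - {..m}. f i = 0" using assms(2) by auto
qed

lemma G_half: assumes "0 < q" "q < 1" "0 < a" "a < 1" "m' \<le> m" "m \<le> n"
  shows "(\<Sum>k\<le>n. cc q a m' k * (\<Sum>i\<le>n. cc q a m i * hh q a (i+k))) = (if m' = m then dd q a m else 0)"
proof -
  define X where "X = qpoch (inverse q ^ m) q m / (a^m * q^(m choose 2))"
  have F: "(\<Sum>i\<le>n. cc q a m i * hh q a (i+k)) = (if k < m then 0 else X)" if "k \<le> m" for k
  proof -
    have "(\<Sum>i\<le>n. cc q a m i * hh q a (i+k)) = (\<Sum>i\<le>m. cc q a m i * hh q a (i+k))"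
      using assms cc_gt by (intro restrict_sum) auto
    thus ?thesis using inner[OF assms(1-4) that] by (simp add: X_def)
  qed
  have "(\<Sum>k\<le>n. cc q a m' k * (\<Sum>i\<le>n. cc q a m i * hh q a (i+k)))
      = (\<Sum>k\<le>m'. cc q a m' k * (\<Sum>i\<le>n. cc q a m i * hh q a (i+k)))"
    using assms cc_gt by (intro restrict_sum) auto
  also have "\<dots> = (\<Sum>k\<le>m'. if k = m then cc q a m m * X else 0)"
  proof (rule sum.cong[OF refl])
    fix k assume "k \<in> {..m'}"
    hence k: "k \<le> m" using assms by simp
    show "cc q a m' k * (\<Sum>i\<le>n. cc q a m i * hh q a (i+k)) = (if k = m then cc q a m m * X else 0)"
      unfolding F[OF k] using k \<open>k \<in> {..m'}\<close> assms(5) by auto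
  qed
  also have "\<dots> = (if m' = m then dd q a m else 0)"
    using dd_eq[OF assms(1-4), of m] assms(5) by (simp add: X_def)
  finally show ?thesis .
qed

lemma G_val: assumes "0 < q" "q < 1" "0 < a" "a < 1" "m \<le> n" "m' \<le> n"
  shows "(\<Sum>i\<le>n. \<Sum>k\<le>n. cc q a m i * cc q a m' k * hh q a (i+k)) = (if m = m' then dd q a m else 0)"
proof (cases "m' \<le> m")
  case True
  have "(\<Sum>i\<le>n. \<Sum>k\<le>n. cc q a m i * cc q a m' k * hh q a (i+k))
      = (\<Sum>k\<le>n. \<Sum>i\<le>n. cc q a m i * cc q a m' k * hh q a (i+k))"
    by (rule sum.swap)
  also have "\<dots> = (\<Sum>k\<le>n. cc q a m' k * (\<Sum>i\<le>n. cc q a m i * hh q a (i+k)))"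
    by (simp add: sum_distrib_left mult_ac)
  also have "\<dots> = (if m' = m then dd q a m else 0)" by (rule G_half[OF assms(1-4) True assms(5)])
  finally show ?thesis by auto
next
  case False
  have "(\<Sum>i\<le>n. \<Sum>k\<le>n. cc q a m i * cc q a m' k * hh q a (i+k))
      = (\<Sum>i\<le>n. cc q a m i * (\<Sum>k\<le>n. cc q a m' k * hh q a (k+i)))"
    by (simp add: sum_distrib_left mult_ac add.commute)
  also have "\<dots> = (if m = m' then dd q a m' else 0)"
    using False by (intro G_half[OF assms(1-4) _ assms(6)]) auto
  finally show ?thesis using False by auto
qed


lemma cc_diag_nz: assumes "0 < q" "q < 1" "0 < a" "a < 1" shows "cc q a m m \<noteq> 0"
  using qpoch_pos[of a q m] assms gb_diag[OF assms(1,2), of m]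
  by (simp add: cc_def wt_def)

lemma dd_pos: assumes "0 < q" "q < 1" "0 < a" "a < 1" shows "dd q a m > 0"
  using qpoch_pos[of a q m] qpoch_pos[of q q m] assms by (simp add: dd_def)

theorem mainTheorem10:
  fixes q \<alpha> lam_s :: real and n :: nat
  assumes "0 < q" and "q < 1" and "\<alpha> > -1"
    and "eigenvalue (hankel_mat q \<alpha> n) lam_s"
    and "\<forall>\<mu>. eigenvalue (hankel_mat q \<alpha> n) \<mu> \<longrightarrow> lam_s \<le> \<mu>"
  shows "lam_s \<ge> inverse (\<Sum>m\<le>n. q ^ m / (qpoch q q m * qpoch (q powr (\<alpha>+1)) q m))
    \<and> (\<forall>m. (ell q \<alpha> m (-1)) ^ 2 = q ^ m / (qpoch q q m * qpoch (q powr (\<alpha>+1)) q m))"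
proof -
  define a where "a = q powr (\<alpha>+1)"
  have q0: "0 < q" and q1: "q < 1" using assms by auto
  have a0: "0 < a" using assms by (simp add: a_def)
  have a1: "a < 1" unfolding a_def using assms powr_less_mono2[of "\<alpha>+1" q 1] by simp
  define H where "H = hankel_mat q \<alpha> n"
  from assms(4) obtain v where v: "v \<in> carrier_vec (dim_row H)" "v \<noteq> 0\<^sub>v (dim_row H)"
      "H *\<^sub>v v = lam_s \<cdot>\<^sub>v v"
    unfolding eigenvalue_def eigenvector_def H_def by auto
  have dr: "dim_row H = Suc n" and dc: "dim_col H = Suc n" by (simp_all add: hankel_mat_def H_def)
  have dv: "dim_vec v = Suc n" using v(1) dr by simp
  define V where "V j = v $ j" for j
  have entry: "H $$ (i,k) = hh q a (i+k)" if "i \<le> n" "k \<le> n" for i k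
    using that hank_pow[OF q0, of "i+k" \<alpha>] by (simp add: hankel_mat_def H_def hh_def a_def)
  have eig: "(\<Sum>k\<le>n. hh q a (i+k) * V k) = lam_s * V i" if "i \<le> n" for i
  proof -
    have "(H *\<^sub>v v) $ i = (\<Sum>k\<in>{0..<Suc n}. H $$ (i,k) * v $ k)"
      using that dr dc dv by (auto simp: scalar_prod_def intro!: sum.cong)
    also have "\<dots> = (\<Sum>k\<le>n. hh q a (i+k) * V k)"
      unfolding atLeast0LessThan lessThan_Suc_atMost using that
      by (intro sum.cong refl) (simp add: entry V_def)
    finally have "(\<Sum>k\<le>n. hh q a (i+k) * V k) = (H *\<^sub>v v) $ i" by simp
    also have "\<dots> = lam_s * V i" using v(3) that dv by (simp add: V_def)
    finally show ?thesis .
  qed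
  have nz: "\<exists>i\<le>n. V i \<noteq> 0"
  proof (rule ccontr)
    assume "\<not> (\<exists>i\<le>n. V i \<noteq> 0)"
    hence "v = 0\<^sub>v (Suc n)" by (intro eq_vecI) (auto simp: dv V_def)
    thus False using v(2) dr by simp
  qed
  define N where "N = (\<Sum>i\<le>n. (V i)\<^sup>2)"
  have Npos: "N > 0"
  proof -
    obtain i where i: "i \<le> n" "V i \<noteq> 0" using nz by auto
    have "(V i)\<^sup>2 \<le> N" unfolding N_def using i by (intro member_le_sum) auto
    moreover have "(V i)\<^sup>2 > 0" using i by simp
    ultimately show ?thesis by linarith
  qed
  have Qeq: "(\<Sum>i\<le>n. \<Sum>k\<le>n. V i * V k * hh q a (i+k)) = lam_s * N"
  proof -
    have "(\<Sum>i\<le>n. \<Sum>k\<le>n. V i * V k * hh q a (i+k)) = (\<Sum>i\<le>n. V i * (\<Sum>k\<le>n. hh q a (i+k) * V k))"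
      by (simp add: sum_distrib_left mult_ac)
    also have "\<dots> = (\<Sum>i\<le>n. V i * (lam_s * V i))"
      by (intro sum.cong refl) (simp add: eig)
    also have "\<dots> = lam_s * N" by (simp add: N_def sum_distrib_left power2_eq_square mult_ac)
    finally show ?thesis .
  qed
  obtain b where b: "\<forall>j\<le>n. V j = (\<Sum>m\<le>n. b m * cc q a m j)"
    using tri_solve[of "cc q a" n V] cc_gt[OF q0] cc_diag_nz[OF q0 q1 a0 a1] by blast
  have Qb: "(\<Sum>i\<le>n. \<Sum>k\<le>n. V i * V k * hh q a (i+k)) = (\<Sum>m\<le>n. (b m)\<^sup>2 * dd q a m)"
  proof -
    have "(\<Sum>i\<le>n. \<Sum>k\<le>n. V i * V k * hh q a (i+k))
       = (\<Sum>i\<le>n. \<Sum>k\<le>n. (\<Sum>m\<le>n. b m * cc q a m i) * (\<Sum>m'\<le>n. b m' * cc q a m' k) * hh q a (i+k))"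
      using b by (intro sum.cong refl) simp
    also have "\<dots> = (\<Sum>m\<le>n. \<Sum>m'\<le>n. b m * b m' * (\<Sum>i\<le>n. \<Sum>k\<le>n. cc q a m i * cc q a m' k * hh q a (i+k)))"
      by (rule quad_expand)
    also have "\<dots> = (\<Sum>m\<le>n. \<Sum>m'\<le>n. (if m' = m then b m * b m * dd q a m else 0))"
      by (intro sum.cong refl) (simp add: G_val[OF q0 q1 a0 a1])
    also have "\<dots> = (\<Sum>m\<le>n. (b m)\<^sup>2 * dd q a m)"
      by (intro sum.cong refl) (simp add: power2_eq_square)
    finally show ?thesis .
  qed
  define P where "P m = (\<Sum>j\<le>n. \<bar>cc q a m j\<bar>)" for m
  have Pm: "P m = 1 / qpoch a q m" if "m \<le> n" for m
  proof -
    have "P m = (\<Sum>j\<le>m. \<bar>cc q a m j\<bar>)" unfolding P_def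
      using that cc_gt[OF q0] by (intro restrict_sum) auto
    also have "\<dots> = Ev q m a" unfolding Ev_def by (simp add: cc_abs[OF q0 q1 a0 a1])
    finally show ?thesis using Ev_closed[OF q0 q1 less_imp_le[OF a0] a1] by simp
  qed
  have absV: "\<bar>V j\<bar> \<le> (\<Sum>m\<le>n. \<bar>b m\<bar> * \<bar>cc q a m j\<bar>)" if "j \<le> n" for j
    using b that sum_abs[of "\<lambda>m. b m * cc q a m j" "{..n}"] by (simp add: abs_mult)
  have L1n: "(\<Sum>j\<le>n. \<bar>V j\<bar>) \<le> (\<Sum>m\<le>n. \<bar>b m\<bar> * P m)"
  proof -
    have "(\<Sum>j\<le>n. \<bar>V j\<bar>) \<le> (\<Sum>j\<le>n. \<Sum>m\<le>n. \<bar>b m\<bar> * \<bar>cc q a m j\<bar>)"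
      using absV by (intro sum_mono) auto
    also have "\<dots> = (\<Sum>m\<le>n. \<Sum>j\<le>n. \<bar>b m\<bar> * \<bar>cc q a m j\<bar>)" by (rule sum.swap)
    also have "\<dots> = (\<Sum>m\<le>n. \<bar>b m\<bar> * P m)" by (simp add: P_def sum_distrib_left)
    finally show ?thesis .
  qed
  define T where "T = (\<Sum>m\<le>n. q ^ m / (qpoch q q m * qpoch a q m))"
  have Tterm: "(P m / sqrt (dd q a m))\<^sup>2 = q ^ m / (qpoch q q m * qpoch a q m)" if "m \<le> n" for m
  proof -
    have A: "qpoch a q m > 0" using qpoch_pos[of a q m] a0 a1 q0 q1 by simp
    have Q: "qpoch q q m > 0" using qpoch_pos[of q q m] q0 q1 by simp
    show ?thesis using dd_pos[OF q0 q1 a0 a1, of m] A Q q0 unfolding Pm[OF that]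
      by (simp add: power_divide dd_def power2_eq_square field_simps)
  qed
  have Tpos: "T > 0" unfolding T_def
  proof (rule sum_pos)
    fix m assume "m \<in> {..n}"
    show "0 < q ^ m / (qpoch q q m * qpoch a q m)"
      using qpoch_pos[of a q m] qpoch_pos[of q q m] a0 a1 q0 q1 by simp
  qed auto
  have "N \<le> (\<Sum>j\<le>n. \<bar>V j\<bar>)\<^sup>2" unfolding N_def by (rule sumsq_le) simp
  also have "\<dots> \<le> (\<Sum>m\<le>n. \<bar>b m\<bar> * P m)\<^sup>2"
    using L1n by (intro power_mono) (auto intro: sum_nonneg)
  also have "(\<Sum>m\<le>n. \<bar>b m\<bar> * P m) = (\<Sum>m\<le>n. (\<bar>b m\<bar> * sqrt (dd q a m)) * (P m / sqrt (dd q a m)))"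
    using dd_pos[OF q0 q1 a0 a1] less_imp_neq[OF dd_pos[OF q0 q1 a0 a1], symmetric]
    by (intro sum.cong refl) (simp add: field_simps)
  also have "(\<dots>)\<^sup>2 \<le> (\<Sum>m\<le>n. (\<bar>b m\<bar> * sqrt (dd q a m))\<^sup>2) * (\<Sum>m\<le>n. (P m / sqrt (dd q a m))\<^sup>2)"
    by (rule CS_sum)
  also have "(\<Sum>m\<le>n. (\<bar>b m\<bar> * sqrt (dd q a m))\<^sup>2) = (\<Sum>m\<le>n. (b m)\<^sup>2 * dd q a m)"
    using dd_pos[OF q0 q1 a0 a1] less_imp_le[OF dd_pos[OF q0 q1 a0 a1]]
    by (intro sum.cong refl) (simp add: power_mult_distrib)
  also have "(\<Sum>m\<le>n. (P m / sqrt (dd q a m))\<^sup>2) = T"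
    unfolding T_def by (intro sum.cong refl) (simp add: Tterm)
  finally have "N \<le> lam_s * N * T" using Qb Qeq by simp
  hence "1 \<le> lam_s * T" using Npos by (simp add: mult.commute mult.left_commute)
  hence part1: "lam_s \<ge> inverse T" using Tpos by (simp add: inverse_eq_divide divide_le_eq mult.commute)
  show ?thesis using part1 part2[OF assms(1-3)] unfolding T_def a_def by auto
qed

end
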